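(* Let $\mathbb{H}=\{z\in\mathbb{C}:\operatorname{Im}z>0\}$ and $z_1,z_2\in\mathbb{H}$. If $\operatorname{Re}(z_1)\ne\operatorname{Re}(z_2)$, put \[ \tilde z=\frac{\overline{z_1}z_1-\overline{z_2}z_2}{(z_1-z_2)+(\overline{z_1}-\overline{z_2})} \] (a real number). Then \[ b_{\mathbb{H},\infty}(z_1,z_2)=\begin{cases}\dfrac{2|\operatorname{Re}(z_1-z_2)|}{|z_1-\overline{z_2}|}, & \text{if } \min\{\operatorname{Re}z_1,\operatorname{Re}z_2\}<\tilde z<\max\{\operatorname{Re}z_1,\operatorname{Re}z_2\},\\[2mm] \dfrac{|z_1-z_2|}{\max\{\operatorname{Im}z_1,\operatorname{Im}z_2\}}, & \text{otherwise}.\end{cases} \]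
   Context: For a domain $G\subsetneq\mathbb{C}$ and $z_1,z_2\in G$, $b_{G,\infty}(z_1,z_2)=\sup_{w\in\partial G}\frac{|z_1-z_2|}{\max\{|z_1-w|,|z_2-w|\}}$; for $G=\mathbb{H}$, $\partial G=\mathbb{R}$. The "otherwise" case includes the case $\operatorname{Re}(z_1)=\operatorname{Re}(z_2)$. *)

theory Defs
  imports "HOL-Analysis.Analysis"
begin

definition upper_half_plane :: "complex set" where
  "upper_half_plane = {z. Im z > 0}"

definition b_inf :: "complex set \<Rightarrow> complex \<Rightarrow> complex \<Rightarrow> real" where
  "b_inf G z1 z2 = (SUP w\<in>frontier G. cmod (z1 - z2) / max (cmod (z1 - w)) (cmod (z2 - w)))"

end

theory Submission
  imports Defs
begin

lemma fr: "frontier upper_half_plane = {z. Im z = 0}"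
proof -
  have "upper_half_plane = {x. \<i> \<bullet> x > 0}"
    by (auto simp: upper_half_plane_def inner_complex_def)
  moreover have "{x. \<i> \<bullet> x = (0::real)} = {z. Im z = 0}"
    by (auto simp: inner_complex_def)
  ultimately show ?thesis using frontier_halfspace_gt[of "\<i>" 0] by simp
qed

lemma key:
  fixes x1 y1 x2 y2 :: real
  assumes y1: "y1 > 0" and y2: "y2 > 0"
  defines "r \<equiv> (x1^2+y1^2-x2^2-y2^2)/(2*(x1-x2))"
  defines "B \<equiv> x1 \<noteq> x2 \<and> min x1 x2 < r \<and> r < max x1 x2"
  defines "M \<equiv> (\<lambda>t. max ((t-x1)^2+y1^2) ((t-x2)^2+y2^2))"
  shows "\<exists>t0. M t0 = (if B then (r-x1)^2+y1^2 else (max y1 y2)^2) \<and> (\<forall>t. M t0 \<le> M t)"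
proof (cases B)
  case True
  then have d: "x1 \<noteq> x2" by (simp add: B_def)
  have rr: "r * (2*(x1-x2)) = x1^2+y1^2-x2^2-y2^2" using d by (simp add: r_def)
  have eq: "(r-x1)^2+y1^2 = (r-x2)^2+y2^2" using rr by (simp add: power2_eq_square algebra_simps)
  have Mr: "M r = (r-x1)^2+y1^2" using eq by (simp add: M_def)
  have "M r \<le> M t" for t
  proof -
    have f1: "(t-x1)^2+y1^2 - ((r-x1)^2+y1^2) = (t-r)*(t+r-2*x1)" by (simp add: power2_eq_square algebra_simps)
    have f2: "(t-x2)^2+y2^2 - ((r-x2)^2+y2^2) = (t-r)*(t+r-2*x2)" by (simp add: power2_eq_square algebra_simps)
    have bt: "(x1 < r \<and> r < x2) \<or> (x2 < r \<and> r < x1)" using True by (auto simp: B_def min_def max_def split: if_splits)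
    have "(t-r)*(t+r-2*x1) \<ge> 0 \<or> (t-r)*(t+r-2*x2) \<ge> 0"
    proof (cases "t \<ge> r")
      case True
      then show ?thesis using bt by (auto intro!: mult_nonneg_nonneg)
    next
      case False
      then show ?thesis using bt by (auto intro!: mult_nonpos_nonpos)
    qed
    then show ?thesis using f1 f2 eq unfolding Mr by (auto simp: M_def)
  qed
  then show ?thesis using Mr True by auto
next
  case False
  have low: "(max y1 y2)^2 \<le> M t" for t
  proof -
    have "y1^2 \<le> M t" "y2^2 \<le> M t" by (simp_all add: M_def le_max_iff_disj)
    moreover have "max y1 y2 = y1 \<or> max y1 y2 = y2" by (simp add: max_def)
    ultimately show ?thesis by auto
  qed
  have ineq: "y1 \<ge> y2 \<Longrightarrow> (x1-x2)^2 + y2^2 \<le> y1^2" "y2 \<ge> y1 \<Longrightarrow> (x1-x2)^2 + y1^2 \<le> y2^2"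
  proof -
    have gen: "(x1-x2)^2 \<le> \<bar>y1^2 - y2^2\<bar>"
    proof (cases "x1 = x2")
      case True then show ?thesis by simp
    next
      case d: False
      have nb: "(r-x1)*(r-x2) \<ge> 0"
        using False d unfolding B_def
        by (cases "x1 < x2") (auto simp: min_def max_def not_less intro: mult_nonneg_nonneg mult_nonpos_nonpos)
      have dd: "2*(x1-x2) \<noteq> 0" using d by simp
      have e1: "(r-x1)*(2*(x1-x2)) = (y1^2-y2^2) - (x1-x2)^2"
        using dd unfolding r_def by (simp add: field_simps power2_eq_square)
      have e2: "(r-x2)*(2*(x1-x2)) = (y1^2-y2^2) + (x1-x2)^2"
        using dd unfolding r_def by (simp add: field_simps power2_eq_square)
      have "((y1^2-y2^2) - (x1-x2)^2) * ((y1^2-y2^2) + (x1-x2)^2) = ((r-x1)*(2*(x1-x2)))*((r-x2)*(2*(x1-x2)))"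
        by (simp only: e1 e2)
      also have "\<dots> = ((r-x1)*(r-x2)) * (2*(x1-x2))^2"
        by (simp add: power2_eq_square algebra_simps)
      also have "\<dots> \<ge> 0" using nb by simp
      finally have "((x1-x2)^2)^2 \<le> (y1^2-y2^2)^2" by (simp add: power2_eq_square algebra_simps)
      then show ?thesis using power2_le_imp_le[of "(x1-x2)^2" "\<bar>y1^2-y2^2\<bar>"] by simp
    qed
    show "y1 \<ge> y2 \<Longrightarrow> (x1-x2)^2 + y2^2 \<le> y1^2"
    proof -
      assume "y1 \<ge> y2"
      then have "y2^2 \<le> y1^2" using y2 by (simp add: power_mono)
      then show ?thesis using gen by simp
    qed
    show "y2 \<ge> y1 \<Longrightarrow> (x1-x2)^2 + y1^2 \<le> y2^2"
    proof -
      assume "y2 \<ge> y1"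
      then have "y1^2 \<le> y2^2" using y1 by (simp add: power_mono)
      then show ?thesis using gen by simp
    qed
  qed
  show ?thesis
  proof (cases "y1 \<ge> y2")
    case True
    have "M x1 = (max y1 y2)^2" using ineq(1)[OF True] True by (simp add: M_def max_def)
    then show ?thesis using False low by (intro exI[of _ x1]) auto
  next
    case f: False
    then have T: "y2 \<ge> y1" by simp
    have "(x2-x1)^2 = (x1-x2)^2" by (simp add: power2_commute)
    then have "M x2 = (max y1 y2)^2" using ineq(2)[OF T] T by (simp add: M_def max_def)
    then show ?thesis using False low by (intro exI[of _ x2]) auto
  qed
qed

theorem theorem3p26:
  fixes z1 z2 :: complex
  assumes "z1 \<in> upper_half_plane" and "z2 \<in> upper_half_plane"
  defines "zt \<equiv> (cnj z1 * z1 - cnj z2 * z2) / ((z1 - z2) + (cnj z1 - cnj z2))"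
  shows "(Re z1 \<noteq> Re z2 \<longrightarrow> zt \<in> \<real>) \<and>
    b_inf upper_half_plane z1 z2 =
      (if Re z1 \<noteq> Re z2 \<and> min (Re z1) (Re z2) < Re zt \<and> Re zt < max (Re z1) (Re z2)
       then 2 * \<bar>Re (z1 - z2)\<bar> / cmod (z1 - cnj z2)
       else cmod (z1 - z2) / max (Im z1) (Im z2))"
proof -
  define x1 where "x1 = Re z1"
  define x2 where "x2 = Re z2"
  define y1 where "y1 = Im z1"
  define y2 where "y2 = Im z2"
  have y1: "y1 > 0" and y2: "y2 > 0" using assms(1,2) by (auto simp: upper_half_plane_def y1_def y2_def)
  define r where "r = (x1^2+y1^2-x2^2-y2^2)/(2*(x1-x2))"
  define B where "B = (x1 \<noteq> x2 \<and> min x1 x2 < r \<and> r < max x1 x2)"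
  define M where "M = (\<lambda>t. max ((t-x1)^2+y1^2) ((t-x2)^2+y2^2))"
  define V where "V = (if B then (r-x1)^2+y1^2 else (max y1 y2)^2)"
  have num: "cnj z1 * z1 - cnj z2 * z2 = of_real (x1^2+y1^2-x2^2-y2^2)"
    by (simp add: complex_eq_iff x1_def x2_def y1_def y2_def power2_eq_square)
  have den: "(z1 - z2) + (cnj z1 - cnj z2) = of_real (2*(x1-x2))"
    by (simp add: complex_eq_iff x1_def x2_def)
  have zt_eq: "zt = of_real r" unfolding zt_def num den r_def by (simp add: of_real_divide)
  have part1: "Re z1 \<noteq> Re z2 \<longrightarrow> zt \<in> \<real>" using zt_eq by simp
  have "\<exists>t0. M t0 = V \<and> (\<forall>t. M t0 \<le> M t)"
    using key[OF y1 y2, of x1 x2] unfolding M_def V_def B_def r_def by simp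
  then obtain t0 where t0: "M t0 = V" "\<And>t. M t0 \<le> M t" by blast
  have Vpos: "V > 0"
  proof -
    have "(r-x1)^2+y1^2 > 0" using y1 by (intro add_nonneg_pos) auto
    moreover have "(max y1 y2)^2 > 0" using y1 by simp
    ultimately show ?thesis by (simp add: V_def)
  qed
  define a where "a = cmod (z1 - z2)"
  have a0: "a \<ge> 0" by (simp add: a_def)
  have cm: "cmod (z - of_real t) = sqrt ((t - Re z)^2 + (Im z)^2)" for z t
    by (simp add: cmod_def power2_commute)
  have smax: "max (sqrt p) (sqrt q) = sqrt (max p q)" for p q :: real
    by (auto simp: max_def)
  have fe: "cmod (z1 - z2) / max (cmod (z1 - of_real t)) (cmod (z2 - of_real t)) = a / sqrt (M t)" for t
    by (simp add: cm smax M_def a_def x1_def x2_def y1_def y2_def)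
  have "frontier upper_half_plane = range of_real"
    unfolding fr by (auto simp: complex_is_Real_iff[symmetric] Reals_def)
  then have "b_inf upper_half_plane z1 z2 = Sup ((\<lambda>t. a / sqrt (M t)) ` UNIV)"
    unfolding b_inf_def by (simp add: image_image fe)
  also have "\<dots> = a / sqrt V"
  proof (rule cSup_eq_maximum)
    show "a / sqrt V \<in> range (\<lambda>t. a / sqrt (M t))" using t0(1) by (metis rangeI)
    fix x assume "x \<in> range (\<lambda>t. a / sqrt (M t))"
    then obtain t where x: "x = a / sqrt (M t)" by auto
    have "sqrt V \<le> sqrt (M t)" using t0 by simp
    then show "x \<le> a / sqrt V" unfolding x using a0 Vpos by (intro divide_left_mono) auto
  qed
  finally have bv: "b_inf upper_half_plane z1 z2 = a / sqrt V" .
  have cond: "(Re z1 \<noteq> Re z2 \<and> min (Re z1) (Re z2) < Re zt \<and> Re zt < max (Re z1) (Re z2)) = B"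
    by (simp add: zt_eq B_def x1_def x2_def)
  have part2: "a / sqrt V = (if B then 2 * \<bar>Re (z1 - z2)\<bar> / cmod (z1 - cnj z2)
       else cmod (z1 - z2) / max (Im z1) (Im z2))"
  proof (cases B)
    case False
    then show ?thesis using y1 y2 by (simp add: V_def a_def y1_def y2_def max_def)
  next
    case True
    then have d: "x1 \<noteq> x2" by (simp add: B_def)
    have e1: "(r-x1)*(2*(x1-x2)) = (y1^2-y2^2) - (x1-x2)^2"
      using d unfolding r_def by (simp add: field_simps power2_eq_square)
    have aa: "a = sqrt ((x1-x2)^2 + (y1-y2)^2)"
      by (simp add: a_def cmod_def x1_def x2_def y1_def y2_def)
    have cc: "cmod (z1 - cnj z2) = sqrt ((x1-x2)^2 + (y1+y2)^2)"
      by (simp add: cmod_def x1_def x2_def y1_def y2_def)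
    have dd: "2 * \<bar>Re (z1 - z2)\<bar> = sqrt (4*(x1-x2)^2)"
      by (simp add: x1_def x2_def real_sqrt_mult)
    have cpos: "(x1-x2)^2 + (y1+y2)^2 > 0" using y1 y2 by (simp add: add_nonneg_pos)
    have VV0: "V * (2*(x1-x2))^2 = ((r-x1)*(2*(x1-x2)))^2 + (2*(x1-x2))^2 * y1^2"
      using True by (simp add: V_def power2_eq_square algebra_simps)
    have VV: "V * (2*(x1-x2))^2 = ((y1^2-y2^2) - (x1-x2)^2)^2 + (2*(x1-x2))^2 * y1^2"
      using VV0 by (simp only: e1)
    have key2: "((x1-x2)^2 + (y1-y2)^2) * ((x1-x2)^2 + (y1+y2)^2) = 4*(x1-x2)^2 * V"
    proof -
      have "((x1-x2)^2 + (y1-y2)^2) * ((x1-x2)^2 + (y1+y2)^2) = V * (2*(x1-x2))^2"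
        unfolding VV by (simp add: power2_eq_square algebra_simps)
      then show ?thesis by (simp add: power2_eq_square algebra_simps)
    qed
    have q: "((x1-x2)^2 + (y1-y2)^2) / V = 4*(x1-x2)^2 / ((x1-x2)^2 + (y1+y2)^2)"
      using frac_eq_eq[of V "(x1-x2)^2 + (y1+y2)^2" "(x1-x2)^2 + (y1-y2)^2" "4*(x1-x2)^2"] Vpos cpos key2
      by (metis less_irrefl)
    have "a / sqrt V = sqrt (((x1-x2)^2 + (y1-y2)^2) / V)"
      unfolding aa by (simp only: real_sqrt_divide)
    also have "\<dots> = sqrt (4*(x1-x2)^2) / cmod (z1 - cnj z2)"
      unfolding q cc by (simp only: real_sqrt_divide)
    finally have "a / sqrt V = sqrt (4*(x1-x2)^2) / cmod (z1 - cnj z2)" .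
    then show ?thesis using True dd by simp
  qed
  show ?thesis using part1 bv part2 cond by simp
qed


end
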